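(* Let $Y$ be a locally compact sober space, let $\mu\colon Y\to[0,1]$ be such that $\mu^{-1}([0,a))$ is open in $Y$ for every $a\in[0,1]$, and let $X=\mu^{-1}(\{0\})$ with the subspace topology. For a non-empty compact saturated $Q\subseteq Y$ let $r(Q)=\max\{\mu(y)\mid y\in Q\}$ (which exists). Then: (a) for every filtered family $(Q_i)_{i\in I}$ of non-empty compact saturated subsets of $Y$ with $\inf_{i\in I} r(Q_i)=0$, the intersection $\bigcap_{i\in I}Q_i$ is a non-empty compact saturated subset of $X$; (b) conversely, every non-empty compact saturated subset $Q$ of $X$ is of the form $Q=\bigcap_{i\in I}Q_i=\bigcap_{i\in I}\mathrm{int}(Q_i)$ for some filtered family $(Q_i)_{i\in I}$ of non-empty compact saturated subsets of $Y$ with $\inf_{i\in I}r(Q_i)=0$, where $\mathrm{int}$ denotes interior in $Y$; and when $Y$ is a continuous dcpo with its Scott topology, the $Q_i$ can be chosen of the form ${\uparrow}A_i$ with $A_i$ a non-empty finite subset of $Y$.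
   Context: Compactness does not presuppose separation; a saturated set is one that is upward closed in the specialization preorder. A family is filtered if any two members contain a third member. ${\uparrow}A$ is the upward closure of $A$. Every LCS-complete space (a $G_\delta$ subset of a locally compact sober space) arises as such an $X$ for suitable $Y,\mu$. *)

theory Defs
  imports "HOL-Analysis.Analysis"
begin

definition spec_le :: "'a topology \<Rightarrow> 'a \<Rightarrow> 'a \<Rightarrow> bool" where
  "spec_le Y x y \<longleftrightarrow> x \<in> topspace Y \<and> y \<in> topspace Y \<and>
     (\<forall>U. openin Y U \<and> x \<in> U \<longrightarrow> y \<in> U)"

definition saturated_in :: "'a topology \<Rightarrow> 'a set \<Rightarrow> bool" where
  "saturated_in Y A \<longleftrightarrow> A \<subseteq> topspace Y \<and>
     (\<forall>x\<in>A. \<forall>y. spec_le Y x y \<longrightarrow> y \<in> A)"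

definition upclosure :: "'a topology \<Rightarrow> 'a set \<Rightarrow> 'a set" where
  "upclosure Y A = {y \<in> topspace Y. \<exists>a\<in>A. spec_le Y a y}"

definition lc_space :: "'a topology \<Rightarrow> bool" where
  "lc_space Y \<longleftrightarrow> (\<forall>x U. openin Y U \<and> x \<in> U \<longrightarrow>
     (\<exists>V K. openin Y V \<and> compactin Y K \<and> x \<in> V \<and> V \<subseteq> K \<and> K \<subseteq> U))"

definition irreducible_closed :: "'a topology \<Rightarrow> 'a set \<Rightarrow> bool" where
  "irreducible_closed Y C \<longleftrightarrow> closedin Y C \<and> C \<noteq> {} \<and>
     (\<forall>A B. closedin Y A \<and> closedin Y B \<and> C \<subseteq> A \<union> B \<longrightarrow> C \<subseteq> A \<or> C \<subseteq> B)"

definition sober_space :: "'a topology \<Rightarrow> bool" where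
  "sober_space Y \<longleftrightarrow> (\<forall>C. irreducible_closed Y C \<longrightarrow>
     (\<exists>!x. x \<in> topspace Y \<and> Y closure_of {x} = C))"

definition ncs :: "'a topology \<Rightarrow> 'a set \<Rightarrow> bool" where
  "ncs Y Q \<longleftrightarrow> Q \<noteq> {} \<and> compactin Y Q \<and> saturated_in Y Q"

definition filtered_family :: "'i set \<Rightarrow> ('i \<Rightarrow> 'a set) \<Rightarrow> bool" where
  "filtered_family I Q \<longleftrightarrow> I \<noteq> {} \<and> (\<forall>i\<in>I. \<forall>j\<in>I. \<exists>k\<in>I. Q k \<subseteq> Q i \<inter> Q j)"

text \<open>r(Q) = max of mu on Q (the theorem also asserts the max is attained).\<close>
definition rmax :: "('a \<Rightarrow> real) \<Rightarrow> 'a set \<Rightarrow> real" where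
  "rmax \<mu> Q = Sup (\<mu> ` Q)"

definition is_lub :: "('a \<Rightarrow> 'a \<Rightarrow> bool) \<Rightarrow> 'a set \<Rightarrow> 'a set \<Rightarrow> 'a \<Rightarrow> bool" where
  "is_lub le S D s \<longleftrightarrow> s \<in> S \<and> (\<forall>d\<in>D. le d s) \<and>
     (\<forall>u\<in>S. (\<forall>d\<in>D. le d u) \<longrightarrow> le s u)"

definition directed_in :: "('a \<Rightarrow> 'a \<Rightarrow> bool) \<Rightarrow> 'a set \<Rightarrow> 'a set \<Rightarrow> bool" where
  "directed_in le S D \<longleftrightarrow> D \<subseteq> S \<and> D \<noteq> {} \<and>
     (\<forall>a\<in>D. \<forall>b\<in>D. \<exists>c\<in>D. le a c \<and> le b c)"

definition is_dcpo :: "('a \<Rightarrow> 'a \<Rightarrow> bool) \<Rightarrow> 'a set \<Rightarrow> bool" where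
  "is_dcpo le S \<longleftrightarrow>
     (\<forall>x\<in>S. le x x) \<and>
     (\<forall>x\<in>S. \<forall>y\<in>S. \<forall>z\<in>S. le x y \<and> le y z \<longrightarrow> le x z) \<and>
     (\<forall>x\<in>S. \<forall>y\<in>S. le x y \<and> le y x \<longrightarrow> x = y) \<and>
     (\<forall>D. directed_in le S D \<longrightarrow> (\<exists>s. is_lub le S D s))"

definition way_below :: "('a \<Rightarrow> 'a \<Rightarrow> bool) \<Rightarrow> 'a set \<Rightarrow> 'a \<Rightarrow> 'a \<Rightarrow> bool" where
  "way_below le S x y \<longleftrightarrow> x \<in> S \<and> y \<in> S \<and>
     (\<forall>D s. directed_in le S D \<and> is_lub le S D s \<and> le y s \<longrightarrow> (\<exists>d\<in>D. le x d))"

definition continuous_dcpo :: "('a \<Rightarrow> 'a \<Rightarrow> bool) \<Rightarrow> 'a set \<Rightarrow> bool" where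
  "continuous_dcpo le S \<longleftrightarrow> is_dcpo le S \<and>
     (\<forall>y\<in>S. directed_in le S {x. way_below le S x y} \<and>
             is_lub le S {x. way_below le S x y} y)"

definition scott_open :: "('a \<Rightarrow> 'a \<Rightarrow> bool) \<Rightarrow> 'a set \<Rightarrow> 'a set \<Rightarrow> bool" where
  "scott_open le S U \<longleftrightarrow> U \<subseteq> S \<and>
     (\<forall>x\<in>U. \<forall>y\<in>S. le x y \<longrightarrow> y \<in> U) \<and>
     (\<forall>D s. directed_in le S D \<and> is_lub le S D s \<and> s \<in> U \<longrightarrow> D \<inter> U \<noteq> {})"

text \<open>Y is (homeomorphic to) a continuous dcpo with its Scott topology: the order is the
  specialization order of Y (which for a Scott topology coincides with the dcpo order),
  it makes topspace Y a continuous dcpo, and the open sets of Y are exactly the Scott-open sets.\<close>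
definition continuous_dcpo_scott :: "'a topology \<Rightarrow> bool" where
  "continuous_dcpo_scott Y \<longleftrightarrow> continuous_dcpo (spec_le Y) (topspace Y) \<and>
     (\<forall>U. openin Y U \<longleftrightarrow> scott_open (spec_le Y) (topspace Y) U)"

end

theory Submission
  imports Defs
begin


lemma spec_trans: "spec_le Y x y \<Longrightarrow> spec_le Y y z \<Longrightarrow> spec_le Y x z"
  by (auto simp: spec_le_def)

lemma spec_refl: "x \<in> topspace Y \<Longrightarrow> spec_le Y x x"
  by (auto simp: spec_le_def)

lemma open_up: "openin Y U \<Longrightarrow> x \<in> U \<Longrightarrow> spec_le Y x y \<Longrightarrow> y \<in> U"
  by (auto simp: spec_le_def)

lemma spec_sub: "spec_le (subtopology Y S) x y \<Longrightarrow> spec_le Y x y"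
  unfolding spec_le_def by (auto simp: openin_subtopology)

lemma upcl_sat: "saturated_in Y (upclosure Y K)"
  unfolding saturated_in_def upclosure_def
proof (intro conjI ballI allI impI)
  fix x y assume "x \<in> {y \<in> topspace Y. \<exists>a\<in>K. spec_le Y a y}" "spec_le Y x y"
  then show "y \<in> {y \<in> topspace Y. \<exists>a\<in>K. spec_le Y a y}"
    using spec_trans[of Y _ x y] by (auto simp: spec_le_def)
qed auto

lemma upcl_sup: "K \<subseteq> topspace Y \<Longrightarrow> K \<subseteq> upclosure Y K"
  unfolding upclosure_def by (auto intro: spec_refl)

lemma upcl_sub: "openin Y W \<Longrightarrow> K \<subseteq> W \<Longrightarrow> upclosure Y K \<subseteq> W"
  unfolding upclosure_def by (auto intro: open_up)

lemma upcl_compact: assumes "compactin Y K" shows "compactin Y (upclosure Y K)"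
  unfolding compactin_def
proof (intro conjI allI impI)
  show "upclosure Y K \<subseteq> topspace Y" unfolding upclosure_def by blast
  fix U assume U: "(\<forall>B\<in>U. openin Y B) \<and> upclosure Y K \<subseteq> \<Union> U"
  have "K \<subseteq> upclosure Y K" using upcl_sup[OF compactin_subset_topspace[OF assms]] .
  then have "K \<subseteq> \<Union>U" using U by blast
  then obtain F where F: "finite F" "F \<subseteq> U" "K \<subseteq> \<Union>F"
    using compactinD[OF assms, of U] U by blast
  have "openin Y (\<Union>F)" using F(2) U by (intro openin_Union) blast
  then have "upclosure Y K \<subseteq> \<Union>F"
    using upcl_sub[of Y "\<Union>F" K] F(3) by blast
  then show "\<exists>F. finite F \<and> F \<subseteq> U \<and> upclosure Y K \<subseteq> \<Union> F" using F by blast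
qed

lemma lc_compact:
  assumes lc: "lc_space Y" and Q: "compactin Y Q" and W: "openin Y W" "Q \<subseteq> W"
  shows "\<exists>K. compactin Y K \<and> Q \<subseteq> Y interior_of K \<and> K \<subseteq> W"
proof -
  have "\<forall>x\<in>Q. \<exists>V K. openin Y V \<and> compactin Y K \<and> x \<in> V \<and> V \<subseteq> K \<and> K \<subseteq> W"
  proof
    fix x assume "x \<in> Q"
    then have "openin Y W \<and> x \<in> W" using W by blast
    then show "\<exists>V K. openin Y V \<and> compactin Y K \<and> x \<in> V \<and> V \<subseteq> K \<and> K \<subseteq> W"
      using lc unfolding lc_space_def by blast
  qed
  then obtain V K where VK: "\<And>x. x \<in> Q \<Longrightarrow> openin Y (V x) \<and> compactin Y (K x) \<and> x \<in> V x \<and> V x \<subseteq> K x \<and> K x \<subseteq> W"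
    by (metis (no_types))
  have "Q \<subseteq> \<Union>(V ` Q)" using VK by blast
  then obtain F where F: "finite F" "F \<subseteq> V ` Q" "Q \<subseteq> \<Union>F"
    using compactinD[OF Q, of "V ` Q"] VK by blast
  then obtain G where G: "G \<subseteq> Q" "finite G" "F = V ` G"
    by (meson finite_subset_image)
  let ?K = "\<Union>(K ` G)"
  have c: "compactin Y ?K" using G VK by (intro compactin_Union) auto
  have o: "openin Y (\<Union>(V ` G))" using G VK by (intro openin_Union) auto
  have s: "\<Union>(V ` G) \<subseteq> ?K" using G VK by blast
  have i: "\<Union>(V ` G) \<subseteq> Y interior_of ?K"
    using interior_of_maximal[OF s o] .
  have w: "?K \<subseteq> W" using G VK by blast
  have "Q \<subseteq> Y interior_of ?K" using F(3) G(3) i by simp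
  then show ?thesis using c w by (intro exI[of _ ?K] conjI)
qed

lemma lc_sat:
  assumes lc: "lc_space Y" and Q: "compactin Y Q" "Q \<noteq> {}" and W: "openin Y W" "Q \<subseteq> W"
  shows "\<exists>P. ncs Y P \<and> Q \<subseteq> Y interior_of P \<and> P \<subseteq> W"
proof -
  obtain K where K: "compactin Y K" "Q \<subseteq> Y interior_of K" "K \<subseteq> W"
    using lc_compact[OF lc Q(1) W] by blast
  have "K \<subseteq> upclosure Y K" using upcl_sup[OF compactin_subset_topspace[OF K(1)]] .
  then have "Y interior_of K \<subseteq> Y interior_of (upclosure Y K)" by (rule interior_of_mono)
  then have "Q \<subseteq> Y interior_of (upclosure Y K)" using K(2) by (rule order_trans[rotated])
  moreover have "upclosure Y K \<noteq> {}"
  proof -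
    obtain q where "q \<in> Q" using Q by blast
    then have "q \<in> K" using K(2) interior_of_subset[of Y K] by blast
    then show ?thesis using \<open>K \<subseteq> upclosure Y K\<close> by blast
  qed
  ultimately show ?thesis using upcl_sub[OF W(1) K(3)] upcl_compact[OF K(1)] upcl_sat[of Y K]
    unfolding ncs_def by blast
qed



lemma mu_max:
  fixes \<mu> :: "'a \<Rightarrow> real"
  assumes range: "\<forall>y\<in>topspace Y. 0 \<le> \<mu> y \<and> \<mu> y \<le> 1"
    and opn: "\<forall>a. 0 \<le> a \<and> a \<le> 1 \<longrightarrow> openin Y {y \<in> topspace Y. \<mu> y < a}"
    and Q: "compactin Y Q" "Q \<noteq> {}"
  shows "\<exists>y\<in>Q. \<mu> y = rmax \<mu> Q \<and> (\<forall>z\<in>Q. \<mu> z \<le> \<mu> y)"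
proof -
  have QT: "Q \<subseteq> topspace Y" using compactin_subset_topspace[OF Q(1)] .
  have ex: "\<exists>y\<in>Q. \<forall>z\<in>Q. \<mu> z \<le> \<mu> y"
  proof (rule ccontr)
    assume "\<not> ?thesis"
    then have nm: "\<forall>y\<in>Q. \<exists>z\<in>Q. \<mu> y < \<mu> z" by (meson not_le)
    define s where "s = Sup (\<mu> ` Q)"
    have bdd: "bdd_above (\<mu> ` Q)" using range QT by (intro bdd_aboveI[of _ 1]) auto
    have le: "\<mu> z \<le> s" if "z \<in> Q" for z
      unfolding s_def using bdd that by (simp add: cSup_upper)
    have ys: "\<mu> y < s" if "y \<in> Q" for y using nm le that by (meson less_le_trans)
    have s1: "s \<le> 1" unfolding s_def using Q(2) range QT by (intro cSup_least) auto
    define f where "f a = {y \<in> topspace Y. \<mu> y < a}" for a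
    have "Q \<subseteq> \<Union>(f ` {a. 0 \<le> a \<and> a < s})"
    proof
      fix y assume y: "y \<in> Q"
      then have "0 \<le> \<mu> y" using range QT by auto
      moreover have "\<mu> y < s" using ys y .
      ultimately have a: "0 \<le> (\<mu> y + s)/2" "(\<mu> y + s)/2 < s" "\<mu> y < (\<mu> y + s)/2"
        by (simp_all add: field_simps)
      have yT: "y \<in> topspace Y" using y QT by (rule subsetD[rotated])
      have "y \<in> f ((\<mu> y + s)/2)" unfolding f_def using a(3) yT by simp
      moreover have "(\<mu> y + s)/2 \<in> {a. 0 \<le> a \<and> a < s}" using a(1,2) by simp
      ultimately show "y \<in> \<Union>(f ` {a. 0 \<le> a \<and> a < s})" by (intro UN_I)
    qed
    moreover have "openin Y B" if hB: "B \<in> f ` {a. 0 \<le> a \<and> a < s}" for B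
    proof -
      obtain a where a: "0 \<le> a" "a < s" "B = f a" using hB by blast
      have "0 \<le> a \<and> a \<le> 1" using a s1 by linarith
      then have "openin Y {y \<in> topspace Y. \<mu> y < a}" using opn by blast
      then show ?thesis using a(3) unfolding f_def by simp
    qed
    ultimately have "\<exists>F. finite F \<and> F \<subseteq> f ` {a. 0 \<le> a \<and> a < s} \<and> Q \<subseteq> \<Union>F"
      by (intro compactinD[OF Q(1)])
    then obtain F where F: "finite F" "F \<subseteq> f ` {a. 0 \<le> a \<and> a < s}" "Q \<subseteq> \<Union>F"
      by blast
    then obtain A where A: "A \<subseteq> {a. 0 \<le> a \<and> a < s}" "finite A" "F = f ` A"
      by (meson finite_subset_image)
    have "A \<noteq> {}" using A F Q(2) by auto
    define m where "m = Max A"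
    have ms: "m < s" using A \<open>A \<noteq> {}\<close> unfolding m_def by auto
    have "\<mu> y \<le> m" if hy: "y \<in> Q" for y
    proof -
      obtain a where "a \<in> A" "y \<in> f a" using F A hy by auto
      moreover have "a \<le> Max A" using Max_ge[OF A(2)] \<open>a \<in> A\<close> .
      ultimately show ?thesis unfolding m_def f_def by simp
    qed
    then have "s \<le> m" unfolding s_def using Q(2) by (intro cSup_least) auto
    then show False using ms by simp
  qed
  then obtain y where y: "y \<in> Q" "\<forall>z\<in>Q. \<mu> z \<le> \<mu> y" by blast
  have "rmax \<mu> Q = \<mu> y" unfolding rmax_def using y by (intro cSup_eq_maximum) auto
  then show ?thesis using y by auto
qed



lemma well_filtered:
  assumes sober: "sober_space Y" and fam: "filtered_family I Q" "\<forall>i\<in>I. ncs Y (Q i)"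
    and U0: "openin Y U0" "(\<Inter>i\<in>I. Q i) \<subseteq> U0"
  shows "\<exists>i\<in>I. Q i \<subseteq> U0"
proof (rule ccontr)
  assume nf: "\<not> (\<exists>i\<in>I. Q i \<subseteq> U0)"
  have Ine: "I \<noteq> {}" using fam(1) unfolding filtered_family_def by blast
  have QT: "Q i \<subseteq> topspace Y" if hi: "i \<in> I" for i
    using fam(2) hi unfolding ncs_def by (meson compactin_subset_topspace)
  have Qc: "compactin Y (Q i)" if hi: "i \<in> I" for i
    using fam(2) hi unfolding ncs_def by blast
  have Qs: "saturated_in Y (Q i)" if hi: "i \<in> I" for i
    using fam(2) hi unfolding ncs_def by blast
  define \<A> where "\<A> = {U. openin Y U \<and> U0 \<subseteq> U \<and> (\<forall>i\<in>I. \<not> Q i \<subseteq> U)}"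
  have "\<forall>C\<in>chains \<A>. \<exists>U\<in>\<A>. \<forall>X\<in>C. X \<subseteq> U"
  proof
    fix C assume C: "C \<in> chains \<A>"
    then have Csub: "C \<subseteq> \<A>" and Cch: "\<forall>X\<in>C. \<forall>Z\<in>C. X \<subseteq> Z \<or> Z \<subseteq> X"
      unfolding chains_alt_def subset.chain_def by blast+
    let ?U = "U0 \<union> \<Union>C"
    have oU: "openin Y ?U"
    proof (rule openin_Un[OF U0(1)])
      show "openin Y (\<Union>C)" using Csub unfolding \<A>_def by (intro openin_Union) blast
    qed
    have nQ: "\<not> Q i \<subseteq> ?U" if hi: "i \<in> I" for i
    proof
      assume sub: "Q i \<subseteq> ?U"
      have oc: "openin Y B" if hB: "B \<in> insert U0 C" for B
      proof (cases "B = U0")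
        case True then show ?thesis using U0(1) by simp
      next
        case False then have "B \<in> \<A>" using hB Csub by blast
        then show ?thesis unfolding \<A>_def by simp
      qed
      have cv: "Q i \<subseteq> \<Union>(insert U0 C)" using sub by simp
      obtain F where F: "finite F" "F \<subseteq> insert U0 C" "Q i \<subseteq> \<Union>F"
        using compactinD[OF Qc[OF hi] oc cv] by blast
      define G where "G = F - {U0}"
      have G1: "finite G" unfolding G_def using F(1) by simp
      have G2: "G \<subseteq> C" unfolding G_def using F(2) by blast
      have G3: "Q i \<subseteq> U0 \<union> \<Union>G" unfolding G_def using F(3) by blast
      show False
      proof (cases "G = {}")
        case True
        then have "Q i \<subseteq> U0" using G3 by simp
        then show False using nf hi by blast
      next
        case False
        have "subset.chain \<A> C" using C unfolding chains_alt_def by simp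
        then have "subset.chain \<A> G" using G2 unfolding subset.chain_def by blast
        then have "\<Union>G \<in> G" by (rule Union_in_chain[OF G1 False])
        then have "\<Union>G \<in> \<A>" using G2 Csub by blast
        then have h1: "U0 \<subseteq> \<Union>G" and h2: "\<not> Q i \<subseteq> \<Union>G" using hi unfolding \<A>_def by auto
        from h1 have "U0 \<union> \<Union>G = \<Union>G" by (rule sup.absorb2)
        then show False using G3 h2 by simp
      qed
    qed
    have "?U \<in> \<A>" unfolding \<A>_def using oU nQ by simp
    moreover have "\<forall>X\<in>C. X \<subseteq> ?U" by auto
    ultimately show "\<exists>U\<in>\<A>. \<forall>X\<in>C. X \<subseteq> U" by (rule bexI[rotated])
  qed
  from Zorn_Lemma2[OF this] obtain M where M: "M \<in> \<A>" "\<forall>X\<in>\<A>. M \<subseteq> X \<longrightarrow> X = M"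
    by blast
  have Mo: "openin Y M" and MU0: "U0 \<subseteq> M" and MQ: "\<forall>i\<in>I. \<not> Q i \<subseteq> M"
    using M(1) unfolding \<A>_def by blast+
  define C where "C = topspace Y - M"
  have big: "\<exists>i\<in>I. Q i \<subseteq> M \<union> (topspace Y - A)" if hA: "closedin Y A" "\<not> C \<subseteq> A" for A
  proof (rule ccontr)
    assume nn: "\<not> (\<exists>i\<in>I. Q i \<subseteq> M \<union> (topspace Y - A))"
    have "openin Y (M \<union> (topspace Y - A))"
      by (intro openin_Un[OF Mo] openin_diff[OF openin_topspace hA(1)])
    then have "M \<union> (topspace Y - A) \<in> \<A>" unfolding \<A>_def using MU0 nn by blast
    then have eq: "M \<union> (topspace Y - A) = M" using M(2)[rule_format, OF _ Un_upper1] by blast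
    obtain c where "c \<in> C" "c \<notin> A" using hA(2) by blast
    then have "c \<in> M \<union> (topspace Y - A)" "c \<notin> M" unfolding C_def by blast+
    then show False using eq by blast
  qed
  have irr: "irreducible_closed Y C"
    unfolding irreducible_closed_def
  proof (intro conjI allI impI)
    show "closedin Y C" unfolding C_def by (rule closedin_diff[OF closedin_topspace Mo])
    obtain i where hi: "i \<in> I" using Ine by blast
    then obtain q where "q \<in> Q i" "q \<notin> M" using MQ by blast
    then show "C \<noteq> {}" unfolding C_def using QT[OF hi] by blast
    fix A B assume AB: "closedin Y A \<and> closedin Y B \<and> C \<subseteq> A \<union> B"
    show "C \<subseteq> A \<or> C \<subseteq> B"
    proof (rule ccontr)
      assume "\<not> (C \<subseteq> A \<or> C \<subseteq> B)"
      then obtain i j where ij: "i \<in> I" "Q i \<subseteq> M \<union> (topspace Y - A)"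
        "j \<in> I" "Q j \<subseteq> M \<union> (topspace Y - B)"
        using big AB by meson
      obtain k where k: "k \<in> I" "Q k \<subseteq> Q i \<inter> Q j"
        using fam(1) ij(1,3) unfolding filtered_family_def by blast
      have "Q k \<subseteq> M"
      proof
        fix x assume x: "x \<in> Q k"
        then have xT: "x \<in> topspace Y" using QT[OF k(1)] by blast
        show "x \<in> M"
        proof (rule ccontr)
          assume "x \<notin> M"
          then have "x \<in> C" "x \<notin> A" "x \<notin> B" using x k(2) ij xT unfolding C_def by blast+
          then show False using AB by blast
        qed
      qed
      then show False using MQ k(1) by blast
    qed
  qed
  obtain x where x: "x \<in> topspace Y" "Y closure_of {x} = C"
    using sober irr unfolding sober_space_def by blast
  have "x \<in> Q i" if hi: "i \<in> I" for i
  proof -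
    obtain q where q: "q \<in> Q i" "q \<notin> M" using MQ hi by blast
    have qT: "q \<in> topspace Y" using q(1) QT[OF hi] by blast
    then have "q \<in> Y closure_of {x}" using q(2) x(2) unfolding C_def by blast
    then have "\<forall>T. q \<in> T \<and> openin Y T \<longrightarrow> x \<in> T" unfolding in_closure_of by blast
    then have "spec_le Y q x" unfolding spec_le_def using qT x(1) by blast
    then show "x \<in> Q i" using Qs[OF hi] q(1) unfolding saturated_in_def by blast
  qed
  then have "x \<in> M" using U0(2) MU0 by blast
  moreover have "x \<in> C" using closure_of_subset[of "{x}" Y] x by blast
  ultimately show False unfolding C_def by blast
qed



lemma dir_single: "z \<in> topspace Y \<Longrightarrow> directed_in (spec_le Y) (topspace Y) {z}"
  unfolding directed_in_def using spec_refl[of z Y] by auto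

lemma lub_single: "z \<in> topspace Y \<Longrightarrow> is_lub (spec_le Y) (topspace Y) {z} z"
  unfolding is_lub_def using spec_refl[of z Y] by auto

lemma wb_S: "way_below (spec_le Y) (topspace Y) y z \<Longrightarrow> y \<in> topspace Y \<and> z \<in> topspace Y"
  unfolding way_below_def by blast

lemma wb_le: assumes "way_below (spec_le Y) (topspace Y) y z" shows "spec_le Y y z"
proof -
  have z: "z \<in> topspace Y" using wb_S[OF assms] by blast
  have "\<exists>d\<in>{z}. spec_le Y y d"
    using assms dir_single[OF z] lub_single[OF z] spec_refl[OF z] unfolding way_below_def by blast
  then show ?thesis by simp
qed

lemma wb_mono: assumes "way_below (spec_le Y) (topspace Y) y z" "spec_le Y z z'"
  shows "way_below (spec_le Y) (topspace Y) y z'"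
  unfolding way_below_def
proof (intro conjI allI impI)
  show "y \<in> topspace Y" using wb_S[OF assms(1)] by blast
  show "z' \<in> topspace Y" using assms(2) unfolding spec_le_def by blast
  fix D s assume h: "directed_in (spec_le Y) (topspace Y) D \<and> is_lub (spec_le Y) (topspace Y) D s \<and> spec_le Y z' s"
  then have "spec_le Y z s" using spec_trans[OF assms(2)] by blast
  then show "\<exists>d\<in>D. spec_le Y y d" using assms(1) h unfolding way_below_def by blast
qed

lemma wb_left: assumes "spec_le Y y' y" "way_below (spec_le Y) (topspace Y) y z"
  shows "way_below (spec_le Y) (topspace Y) y' z"
  unfolding way_below_def
proof (intro conjI allI impI)
  show "y' \<in> topspace Y" using assms(1) unfolding spec_le_def by blast
  show "z \<in> topspace Y" using wb_S[OF assms(2)] by blast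
  fix D s assume h: "directed_in (spec_le Y) (topspace Y) D \<and> is_lub (spec_le Y) (topspace Y) D s \<and> spec_le Y z s"
  then obtain d where "d \<in> D" "spec_le Y y d" using assms(2) unfolding way_below_def by blast
  then show "\<exists>d\<in>D. spec_le Y y' d" using spec_trans[OF assms(1)] by blast
qed

lemma cd_open: "continuous_dcpo_scott Y \<Longrightarrow> openin Y U \<longleftrightarrow> scott_open (spec_le Y) (topspace Y) U"
  unfolding continuous_dcpo_scott_def by blast

lemma cd_cont: assumes "continuous_dcpo_scott Y" "x \<in> topspace Y"
  shows "directed_in (spec_le Y) (topspace Y) {w. way_below (spec_le Y) (topspace Y) w x} \<and>
    is_lub (spec_le Y) (topspace Y) {w. way_below (spec_le Y) (topspace Y) w x} x"
proof -
  have "continuous_dcpo (spec_le Y) (topspace Y)" using assms(1) unfolding continuous_dcpo_scott_def by (rule conjunct1)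
  then have c0: "\<forall>x\<in>topspace Y. directed_in (spec_le Y) (topspace Y) {w. way_below (spec_le Y) (topspace Y) w x} \<and>
    is_lub (spec_le Y) (topspace Y) {w. way_below (spec_le Y) (topspace Y) w x} x"
    unfolding continuous_dcpo_def by (rule conjunct2)
  then show ?thesis using assms(2) by (rule bspec)
qed

lemma wb_open:
  assumes cd: "continuous_dcpo_scott Y" and y: "y \<in> topspace Y"
  shows "openin Y {z. way_below (spec_le Y) (topspace Y) y z}"
proof -
  let ?le = "spec_le Y" and ?S = "topspace Y"
  have "continuous_dcpo ?le ?S" using cd unfolding continuous_dcpo_scott_def by (rule conjunct1)
  then have c0: "\<forall>x\<in>?S. directed_in ?le ?S {w. way_below ?le ?S w x} \<and> is_lub ?le ?S {w. way_below ?le ?S w x} x"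
    unfolding continuous_dcpo_def by (rule conjunct2)
  have cont: "\<And>x. x \<in> ?S \<Longrightarrow> directed_in ?le ?S {w. way_below ?le ?S w x} \<and> is_lub ?le ?S {w. way_below ?le ?S w x} x"
    using c0 by (rule bspec)
  have "scott_open ?le ?S {z. way_below ?le ?S y z}"
    unfolding scott_open_def
  proof (intro conjI ballI allI impI)
    show "{z. way_below ?le ?S y z} \<subseteq> ?S" using wb_S[of Y y] by blast
    fix x z assume "x \<in> {z. way_below ?le ?S y z}" "z \<in> ?S" "?le x z"
    then show "z \<in> {z. way_below ?le ?S y z}" using wb_mono[of Y y x z] by simp
  next
    fix D s assume h: "directed_in ?le ?S D \<and> is_lub ?le ?S D s \<and> s \<in> {z. way_below ?le ?S y z}"
    have Dd: "directed_in ?le ?S D" and Dl: "is_lub ?le ?S D s" and ys: "way_below ?le ?S y s"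
      using h by blast+
    have DS: "D \<subseteq> ?S" using Dd unfolding directed_in_def by blast
    define E where "E = {e. \<exists>d\<in>D. way_below ?le ?S e d}"
    have Ed: "directed_in ?le ?S E"
      unfolding directed_in_def
    proof (intro conjI ballI)
      show "E \<subseteq> ?S"
      proof
        fix e assume "e \<in> E"
        then obtain d where "way_below ?le ?S e d" unfolding E_def by blast
        then show "e \<in> ?S" using wb_S[of Y e d] by simp
      qed
      obtain d where d: "d \<in> D" using Dd unfolding directed_in_def by blast
      then have "d \<in> ?S" using DS by blast
      then have "directed_in ?le ?S {w. way_below ?le ?S w d}" using cont by simp
      then have "{w. way_below ?le ?S w d} \<noteq> {}" unfolding directed_in_def by simp
      then show "E \<noteq> {}" unfolding E_def using d by blast
      fix e1 e2 assume e: "e1 \<in> E" "e2 \<in> E"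
      then obtain d1 d2 where d12: "d1 \<in> D" "way_below ?le ?S e1 d1" "d2 \<in> D" "way_below ?le ?S e2 d2"
        unfolding E_def by blast
      then obtain d3 where d3: "d3 \<in> D" "?le d1 d3" "?le d2 d3"
        using Dd unfolding directed_in_def by blast
      have w1: "way_below ?le ?S e1 d3" using wb_mono[OF d12(2) d3(2)] .
      have w2: "way_below ?le ?S e2 d3" using wb_mono[OF d12(4) d3(3)] .
      have "d3 \<in> ?S" using d3(1) DS by blast
      then have "directed_in ?le ?S {w. way_below ?le ?S w d3}" using cont by simp
      then obtain c where c: "way_below ?le ?S c d3" "?le e1 c" "?le e2 c"
        using w1 w2 unfolding directed_in_def by blast
      then have "c \<in> E" unfolding E_def using d3(1) by blast
      then show "\<exists>c\<in>E. ?le e1 c \<and> ?le e2 c" using c by blast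
    qed
    have El: "is_lub ?le ?S E s"
      unfolding is_lub_def
    proof (intro conjI ballI impI)
      show sS: "s \<in> ?S" using Dl unfolding is_lub_def by blast
      fix e assume "e \<in> E"
      then obtain d where d: "d \<in> D" "way_below ?le ?S e d" unfolding E_def by blast
      have "?le d s" using Dl d(1) unfolding is_lub_def by blast
      then show "?le e s" using spec_trans[OF wb_le[OF d(2)]] by blast
    next
      fix u assume u: "u \<in> ?S" "\<forall>e\<in>E. ?le e u"
      have "?le d u" if hd: "d \<in> D" for d
      proof -
        have "d \<in> ?S" using hd DS by blast
        then have l: "is_lub ?le ?S {w. way_below ?le ?S w d} d" using cont by simp
        have "\<forall>w\<in>{w. way_below ?le ?S w d}. ?le w u" using u(2) hd unfolding E_def by blast
        then show "?le d u" using l u(1) unfolding is_lub_def by blast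
      qed
      then show "?le s u" using Dl u(1) unfolding is_lub_def by blast
    qed
    have "s \<in> ?S" using El unfolding is_lub_def by blast
    then have ss: "spec_le Y s s" by (rule spec_refl)
    have "\<forall>D t. directed_in ?le ?S D \<and> is_lub ?le ?S D t \<and> ?le s t \<longrightarrow> (\<exists>d\<in>D. ?le y d)"
      using ys unfolding way_below_def by blast
    then have "directed_in ?le ?S E \<and> is_lub ?le ?S E s \<and> ?le s s \<longrightarrow> (\<exists>d\<in>E. ?le y d)" by blast
    then have "\<exists>e\<in>E. ?le y e" using Ed El ss by blast
    then obtain e where e: "e \<in> E" "?le y e" by blast
    then obtain d where d: "d \<in> D" "way_below ?le ?S e d" unfolding E_def by blast
    have "way_below ?le ?S y d" by (rule wb_left[OF e(2) d(2)])
    then show "D \<inter> {z. way_below ?le ?S y z} \<noteq> {}" using d(1) by blast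
  qed
  then show ?thesis using cd_open[OF cd] by simp
qed

lemma wb_approx:
  assumes cd: "continuous_dcpo_scott Y" and W: "openin Y W" and x: "x \<in> W"
  shows "\<exists>y\<in>W. way_below (spec_le Y) (topspace Y) y x"
proof -
  let ?le = "spec_le Y" and ?S = "topspace Y"
  have xS: "x \<in> ?S" using openin_subset[OF W] x by blast
  have so: "scott_open ?le ?S W" using cd_open[OF cd] W by simp
  have "directed_in ?le ?S {w. way_below ?le ?S w x} \<and> is_lub ?le ?S {w. way_below ?le ?S w x} x"
    using cd_cont[OF cd xS] .
  then have "{w. way_below ?le ?S w x} \<inter> W \<noteq> {}" using so x unfolding scott_open_def by blast
  then show ?thesis by blast
qed



lemma dcpo_approx:
  assumes cd: "continuous_dcpo_scott Y" and Q: "compactin Y Q" "Q \<noteq> {}"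
    and W: "openin Y W" "Q \<subseteq> W"
  shows "\<exists>A. finite A \<and> A \<noteq> {} \<and> A \<subseteq> topspace Y \<and> Q \<subseteq> Y interior_of (upclosure Y A) \<and> upclosure Y A \<subseteq> W"
proof -
  let ?wb = "way_below (spec_le Y) (topspace Y)"
  have "\<forall>x\<in>Q. \<exists>y. y \<in> W \<and> ?wb y x"
  proof
    fix x assume "x \<in> Q"
    then have "x \<in> W" using W(2) by blast
    then show "\<exists>y. y \<in> W \<and> ?wb y x" using wb_approx[OF cd W(1)] by blast
  qed
  then obtain g where g: "\<And>x. x \<in> Q \<Longrightarrow> g x \<in> W \<and> ?wb (g x) x"
    by (metis (no_types))
  have WT: "W \<subseteq> topspace Y" by (rule openin_subset[OF W(1)])
  define Ow where "Ow x = {z. ?wb (g x) z}" for x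
  have Oo: "openin Y B" if hB: "B \<in> Ow ` Q" for B
  proof -
    obtain x where x: "x \<in> Q" "B = Ow x" using hB by blast
    have "g x \<in> topspace Y" using g[OF x(1)] WT by blast
    then show ?thesis unfolding x(2) Ow_def by (rule wb_open[OF cd])
  qed
  have cv: "Q \<subseteq> \<Union>(Ow ` Q)"
  proof
    fix x assume x: "x \<in> Q"
    then have "x \<in> Ow x" unfolding Ow_def using g[OF x] by simp
    then show "x \<in> \<Union>(Ow ` Q)" using x by blast
  qed
  obtain F where F: "finite F" "F \<subseteq> Ow ` Q" "Q \<subseteq> \<Union>F"
    using compactinD[OF Q(1) Oo cv] by blast
  then obtain G where G: "G \<subseteq> Q" "finite G" "F = Ow ` G"
    by (meson finite_subset_image)
  define A where "A = g ` G"
  have A1: "finite A" unfolding A_def using G(2) by simp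
  have "G \<noteq> {}" using Q(2) F(3) G(3) by auto
  then have A2: "A \<noteq> {}" unfolding A_def by simp
  have AW: "A \<subseteq> W" unfolding A_def using g G(1) by blast
  then have A3: "A \<subseteq> topspace Y" using WT by blast
  have o: "openin Y (\<Union>(Ow ` G))" using Oo G(1) by (intro openin_Union) blast
  have s: "\<Union>(Ow ` G) \<subseteq> upclosure Y A"
  proof
    fix z assume "z \<in> \<Union>(Ow ` G)"
    then obtain x where x: "x \<in> G" "?wb (g x) z" unfolding Ow_def by blast
    have "spec_le Y (g x) z" by (rule wb_le[OF x(2)])
    moreover have "z \<in> topspace Y" using wb_S[OF x(2)] by blast
    moreover have "g x \<in> A" unfolding A_def using x(1) by blast
    ultimately show "z \<in> upclosure Y A" unfolding upclosure_def by blast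
  qed
  have "Q \<subseteq> Y interior_of (upclosure Y A)"
    using F(3) G(3) interior_of_maximal[OF s o] by simp
  moreover have "upclosure Y A \<subseteq> W" by (rule upcl_sub[OF W(1) AW])
  ultimately show ?thesis using A1 A2 A3 by blast
qed



lemma family:
  fixes \<mu> :: "'a \<Rightarrow> real"
  assumes range: "\<forall>y\<in>topspace Y. 0 \<le> \<mu> y \<and> \<mu> y \<le> 1"
    and opn: "\<forall>a. 0 \<le> a \<and> a \<le> 1 \<longrightarrow> openin Y {y \<in> topspace Y. \<mu> y < a}"
    and QT: "Q \<subseteq> topspace Y" and Q0: "\<forall>q\<in>Q. \<mu> q = 0"
    and sep: "\<forall>y\<in>topspace Y. y \<notin> Q \<longrightarrow> (\<exists>U. openin Y U \<and> Q \<subseteq> U \<and> y \<notin> U)"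
    and Fsub: "\<forall>P\<in>\<F>. ncs Y P \<and> Q \<subseteq> Y interior_of P"
    and Fex: "\<forall>W. openin Y W \<and> Q \<subseteq> W \<longrightarrow> (\<exists>P\<in>\<F>. P \<subseteq> W)"
  shows "filtered_family \<F> id \<and> (\<forall>P\<in>\<F>. ncs Y P) \<and> (INF P\<in>\<F>. rmax \<mu> P) = 0 \<and>
    Q = \<Inter>\<F> \<and> Q = (\<Inter>P\<in>\<F>. Y interior_of P)"
proof -
  have "\<exists>P\<in>\<F>. P \<subseteq> topspace Y" using Fex QT by blast
  then have Fne: "\<F> \<noteq> {}" by blast
  have ff: "filtered_family \<F> id"
    unfolding filtered_family_def
  proof (intro conjI ballI)
    show "\<F> \<noteq> {}" by (rule Fne)
    fix P1 P2 assume P: "P1 \<in> \<F>" "P2 \<in> \<F>"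
    let ?W = "Y interior_of P1 \<inter> Y interior_of P2"
    have "openin Y ?W" by (intro openin_Int openin_interior_of)
    moreover have "Q \<subseteq> ?W" using Fsub P by blast
    ultimately obtain P where P': "P \<in> \<F>" "P \<subseteq> ?W" using Fex by blast
    have "?W \<subseteq> P1 \<inter> P2" using interior_of_subset[of Y P1] interior_of_subset[of Y P2] by blast
    with P'(2) have "P \<subseteq> P1 \<inter> P2" by (rule subset_trans)
    then show "\<exists>k\<in>\<F>. id k \<subseteq> id P1 \<inter> id P2" using P'(1) by (intro bexI[of _ P]) simp_all
  qed
  have ncsF: "\<forall>P\<in>\<F>. ncs Y P" using Fsub by blast
  have mx: "\<exists>y\<in>P. \<mu> y = rmax \<mu> P \<and> (\<forall>z\<in>P. \<mu> z \<le> \<mu> y)" if hP: "P \<in> \<F>" for P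
  proof -
    have "compactin Y P" "P \<noteq> {}" using ncsF hP unfolding ncs_def by blast+
    then show ?thesis by (rule mu_max[OF range opn])
  qed
  have PT: "P \<subseteq> topspace Y" if hP: "P \<in> \<F>" for P
  proof -
    have "compactin Y P" using ncsF hP unfolding ncs_def by blast
    then show ?thesis by (rule compactin_subset_topspace)
  qed
  have r0: "0 \<le> rmax \<mu> P" if hP: "P \<in> \<F>" for P
  proof -
    obtain y where y: "y \<in> P" "\<mu> y = rmax \<mu> P" using mx[OF hP] by blast
    then have "y \<in> topspace Y" using PT[OF hP] by blast
    then have "0 \<le> \<mu> y" using range by blast
    then show ?thesis using y(2) by simp
  qed
  have bdd: "bdd_below (rmax \<mu> ` \<F>)" using r0 by (intro bdd_belowI[of _ 0]) blast
  define m where "m = (INF P\<in>\<F>. rmax \<mu> P)"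
  have m0: "0 \<le> m" unfolding m_def using Fne r0 by (intro cINF_greatest) auto
  have "\<not> 0 < m"
  proof
    assume mpos: "0 < m"
    define e where "e = min m 1"
    have e: "0 < e" "e \<le> 1" "e \<le> m" unfolding e_def using mpos by auto
    have "openin Y {y \<in> topspace Y. \<mu> y < e}" using opn e by simp
    moreover have "Q \<subseteq> {y \<in> topspace Y. \<mu> y < e}" using QT Q0 e by auto
    ultimately obtain P where P: "P \<in> \<F>" "P \<subseteq> {y \<in> topspace Y. \<mu> y < e}" using Fex by blast
    obtain y where y: "y \<in> P" "\<mu> y = rmax \<mu> P" using mx[OF P(1)] by blast
    have "rmax \<mu> P < e" using y P(2) by auto
    moreover have "m \<le> rmax \<mu> P" unfolding m_def using bdd P(1) by (rule cINF_lower)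
    ultimately show False using e by simp
  qed
  then have m00: "m = 0" using m0 by simp
  have i1: "Q \<subseteq> (\<Inter>P\<in>\<F>. Y interior_of P)" using Fsub by blast
  have i2: "(\<Inter>P\<in>\<F>. Y interior_of P) \<subseteq> \<Inter>\<F>"
  proof (rule subsetI)
    fix y assume "y \<in> (\<Inter>P\<in>\<F>. Y interior_of P)"
    then have "\<forall>P\<in>\<F>. y \<in> P" using interior_of_subset[of Y] by blast
    then show "y \<in> \<Inter>\<F>" by blast
  qed
  have i3: "\<Inter>\<F> \<subseteq> Q"
  proof
    fix y assume y: "y \<in> \<Inter>\<F>"
    obtain P0 where "P0 \<in> \<F>" using Fne by blast
    then have yT: "y \<in> topspace Y" using y PT[OF \<open>P0 \<in> \<F>\<close>] by blast
    show "y \<in> Q"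
    proof (rule ccontr)
      assume "y \<notin> Q"
      then obtain U where U: "openin Y U" "Q \<subseteq> U" "y \<notin> U" using sep yT by blast
      then obtain P where "P \<in> \<F>" "P \<subseteq> U" using Fex by blast
      then show False using y U(3) by blast
    qed
  qed
  have e1: "Q = \<Inter>\<F>" using subset_trans[OF i1 i2] i3 by (rule subset_antisym)
  have e2: "Q = (\<Inter>P\<in>\<F>. Y interior_of P)" using i1 subset_trans[OF i2 i3] by (rule subset_antisym)
  have e3: "(INF P\<in>\<F>. rmax \<mu> P) = 0" using m00 unfolding m_def .
  show ?thesis using ff ncsF e1 e2 e3 by (intro conjI)
qed

lemma sepX:
  fixes \<mu> :: "'a \<Rightarrow> real"
  assumes range: "\<forall>y\<in>topspace Y. 0 \<le> \<mu> y \<and> \<mu> y \<le> 1"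
    and opn: "\<forall>a. 0 \<le> a \<and> a \<le> 1 \<longrightarrow> openin Y {y \<in> topspace Y. \<mu> y < a}"
    and Q: "ncs (subtopology Y {y \<in> topspace Y. \<mu> y = 0}) Q"
  shows "Q \<noteq> {}" "compactin Y Q" "Q \<subseteq> topspace Y" "\<forall>q\<in>Q. \<mu> q = 0"
    "\<forall>y\<in>topspace Y. y \<notin> Q \<longrightarrow> (\<exists>U. openin Y U \<and> Q \<subseteq> U \<and> y \<notin> U)"
proof -
  let ?S = "{y \<in> topspace Y. \<mu> y = 0}"
  show "Q \<noteq> {}" using Q unfolding ncs_def by blast
  have c: "compactin Y Q \<and> Q \<subseteq> ?S" using Q unfolding ncs_def compactin_subtopology by blast
  then show "compactin Y Q" by blast
  show "Q \<subseteq> topspace Y" using c by blast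
  show Q0: "\<forall>q\<in>Q. \<mu> q = 0" using c by blast
  have sat: "\<forall>x\<in>Q. \<forall>y. spec_le (subtopology Y ?S) x y \<longrightarrow> y \<in> Q"
    using Q unfolding ncs_def saturated_in_def by blast
  show "\<forall>y\<in>topspace Y. y \<notin> Q \<longrightarrow> (\<exists>U. openin Y U \<and> Q \<subseteq> U \<and> y \<notin> U)"
  proof (intro ballI impI)
    fix y assume yT: "y \<in> topspace Y" and yQ: "y \<notin> Q"
    show "\<exists>U. openin Y U \<and> Q \<subseteq> U \<and> y \<notin> U"
    proof (cases "\<mu> y = 0")
      case True
      let ?U = "\<Union>{U. openin Y U \<and> y \<notin> U}"
      have "openin Y ?U" by (intro openin_Union) blast
      moreover have "y \<notin> ?U" by blast
      moreover have "Q \<subseteq> ?U"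
      proof
        fix q assume qQ: "q \<in> Q"
        have "\<not> spec_le (subtopology Y ?S) q y" using sat qQ yQ by blast
        moreover have "q \<in> topspace (subtopology Y ?S)" "y \<in> topspace (subtopology Y ?S)"
          using c qQ yT True by auto
        ultimately obtain V where V: "openin (subtopology Y ?S) V" "q \<in> V" "y \<notin> V"
          unfolding spec_le_def by blast
        then obtain U' where U': "openin Y U'" "V = U' \<inter> ?S" unfolding openin_subtopology by blast
        have "y \<notin> U'" using V(3) U'(2) yT True by blast
        moreover have "q \<in> U'" using V(2) U'(2) by blast
        ultimately show "q \<in> ?U" using U'(1) by blast
      qed
      ultimately show ?thesis by blast
    next
      case False
      then have p: "0 < \<mu> y" "\<mu> y \<le> 1" using range yT by force+
      have "openin Y {z \<in> topspace Y. \<mu> z < \<mu> y}" using opn p by simp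
      moreover have "Q \<subseteq> {z \<in> topspace Y. \<mu> z < \<mu> y}" using c p by auto
      moreover have "y \<notin> {z \<in> topspace Y. \<mu> z < \<mu> y}" by simp
      ultimately show ?thesis by blast
    qed
  qed
qed



lemma part2:
  fixes Y :: "'a topology" and \<mu> :: "'a \<Rightarrow> real" and Q :: "'i \<Rightarrow> 'a set"
  assumes sober: "sober_space Y"
    and range: "\<forall>y\<in>topspace Y. 0 \<le> \<mu> y \<and> \<mu> y \<le> 1"
    and opn: "\<forall>a. 0 \<le> a \<and> a \<le> 1 \<longrightarrow> openin Y {y \<in> topspace Y. \<mu> y < a}"
    and fam: "filtered_family I Q" "\<forall>i\<in>I. ncs Y (Q i)" and inf0: "(INF i\<in>I. rmax \<mu> (Q i)) = 0"
  shows "ncs (subtopology Y {y \<in> topspace Y. \<mu> y = 0}) (\<Inter>i\<in>I. Q i)"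
proof -
  let ?S = "{y \<in> topspace Y. \<mu> y = 0}"
  let ?N = "\<Inter>i\<in>I. Q i"
  have Ine: "I \<noteq> {}" using fam(1) unfolding filtered_family_def by blast
  have Qc: "compactin Y (Q i)" if hi: "i \<in> I" for i using fam(2) hi unfolding ncs_def by blast
  have Qs: "saturated_in Y (Q i)" if hi: "i \<in> I" for i using fam(2) hi unfolding ncs_def by blast
  have Qn: "Q i \<noteq> {}" if hi: "i \<in> I" for i using fam(2) hi unfolding ncs_def by blast
  have QT: "Q i \<subseteq> topspace Y" if hi: "i \<in> I" for i by (rule compactin_subset_topspace[OF Qc[OF hi]])
  obtain i0 where i0: "i0 \<in> I" using Ine by blast
  have NT: "?N \<subseteq> topspace Y" using QT[OF i0] i0 by blast
  have ne: "?N \<noteq> {}"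
  proof
    assume "?N = {}"
    then have "?N \<subseteq> {}" by simp
    then obtain i where "i \<in> I" "Q i \<subseteq> {}" using well_filtered[OF sober fam openin_empty] by blast
    then show False using Qn by blast
  qed
  have cN: "compactin Y ?N"
    unfolding compactin_def
  proof (intro conjI allI impI)
    show "?N \<subseteq> topspace Y" by (rule NT)
    fix U assume U: "(\<forall>B\<in>U. openin Y B) \<and> ?N \<subseteq> \<Union>U"
    have "openin Y (\<Union>U)" using U by (intro openin_Union) blast
    then obtain i where i: "i \<in> I" "Q i \<subseteq> \<Union>U" using well_filtered[OF sober fam] U by blast
    have "\<And>B. B \<in> U \<Longrightarrow> openin Y B" using U by blast
    then obtain F where F: "finite F" "F \<subseteq> U" "Q i \<subseteq> \<Union>F" using compactinD[OF Qc[OF i(1)] _ i(2)] by blast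
    have "?N \<subseteq> Q i" by (rule INT_lower[OF i(1)])
    then have "?N \<subseteq> \<Union>F" using F(3) by (rule subset_trans)
    then show "\<exists>F. finite F \<and> F \<subseteq> U \<and> ?N \<subseteq> \<Union>F" using F(1,2) by blast
  qed
  have N0: "?N \<subseteq> ?S"
  proof
    fix y assume y: "y \<in> ?N"
    have "\<mu> y \<le> rmax \<mu> (Q i)" if hi: "i \<in> I" for i
    proof -
      obtain z where "z \<in> Q i" "\<mu> z = rmax \<mu> (Q i)" "\<forall>w\<in>Q i. \<mu> w \<le> \<mu> z"
        using mu_max[OF range opn Qc[OF hi] Qn[OF hi]] by blast
      moreover have "y \<in> Q i" using y hi by blast
      ultimately show ?thesis by metis
    qed
    then have "\<mu> y \<le> (INF i\<in>I. rmax \<mu> (Q i))" using Ine by (intro cINF_greatest) auto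
    then have "\<mu> y \<le> 0" using inf0 by simp
    moreover have yT: "y \<in> topspace Y" using y NT by blast
    moreover have "0 \<le> \<mu> y" using range yT by blast
    ultimately show "y \<in> ?S" by simp
  qed
  have "compactin (subtopology Y ?S) ?N" unfolding compactin_subtopology using cN N0 by blast
  moreover have "saturated_in (subtopology Y ?S) ?N"
    unfolding saturated_in_def
  proof (intro conjI ballI allI impI)
    show "?N \<subseteq> topspace (subtopology Y ?S)" using NT N0 by simp
    fix x y assume x: "x \<in> ?N" and xy: "spec_le (subtopology Y ?S) x y"
    have xy': "spec_le Y x y" by (rule spec_sub[OF xy])
    have "y \<in> Q i" if hi: "i \<in> I" for i
      using Qs[OF hi] x hi xy' unfolding saturated_in_def by blast
    then show "y \<in> ?N" by blast
  qed
  ultimately show ?thesis using ne unfolding ncs_def by blast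
qed

theorem theorem17p3:
  fixes Y :: "'a topology" and \<mu> :: "'a \<Rightarrow> real"
  assumes lc: "lc_space Y"
    and sober: "sober_space Y"
    and range: "\<forall>y\<in>topspace Y. 0 \<le> \<mu> y \<and> \<mu> y \<le> 1"
    and opn: "\<forall>a. 0 \<le> a \<and> a \<le> 1 \<longrightarrow> openin Y {y \<in> topspace Y. \<mu> y < a}"
  defines "X \<equiv> subtopology Y {y \<in> topspace Y. \<mu> y = 0}"
  shows
    "(\<forall>Q. ncs Y Q \<longrightarrow> (\<exists>y\<in>Q. \<mu> y = rmax \<mu> Q \<and> (\<forall>z\<in>Q. \<mu> z \<le> \<mu> y)))
     \<and> (\<forall>(I :: 'i set) Q. filtered_family I Q \<and> (\<forall>i\<in>I. ncs Y (Q i)) \<and>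
           (INF i\<in>I. rmax \<mu> (Q i)) = 0 \<longrightarrow> ncs X (\<Inter>i\<in>I. Q i))
     \<and> (\<forall>Q. ncs X Q \<longrightarrow>
           (\<exists>\<Q> :: 'a set set. filtered_family \<Q> id \<and> (\<forall>P\<in>\<Q>. ncs Y P) \<and>
              (INF P\<in>\<Q>. rmax \<mu> P) = 0 \<and> Q = \<Inter>\<Q> \<and> Q = (\<Inter>P\<in>\<Q>. Y interior_of P)))
     \<and> (continuous_dcpo_scott Y \<longrightarrow> (\<forall>Q. ncs X Q \<longrightarrow>
           (\<exists>\<Q> :: 'a set set. filtered_family \<Q> id \<and> (\<forall>P\<in>\<Q>. ncs Y P) \<and>
              (INF P\<in>\<Q>. rmax \<mu> P) = 0 \<and> Q = \<Inter>\<Q> \<and> Q = (\<Inter>P\<in>\<Q>. Y interior_of P) \<and>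
              (\<forall>P\<in>\<Q>. \<exists>A. finite A \<and> A \<noteq> {} \<and> A \<subseteq> topspace Y \<and> P = upclosure Y A))))"
proof (intro conjI allI impI)
  fix Q assume "ncs Y Q"
  then have "compactin Y Q" "Q \<noteq> {}" unfolding ncs_def by blast+
  then show "\<exists>y\<in>Q. \<mu> y = rmax \<mu> Q \<and> (\<forall>z\<in>Q. \<mu> z \<le> \<mu> y)" by (rule mu_max[OF range opn])
next
  fix I :: "'i set" and Q :: "'i \<Rightarrow> 'a set"
  assume h: "filtered_family I Q \<and> (\<forall>i\<in>I. ncs Y (Q i)) \<and> (INF i\<in>I. rmax \<mu> (Q i)) = 0"
  then have "filtered_family I Q" "\<forall>i\<in>I. ncs Y (Q i)" "(INF i\<in>I. rmax \<mu> (Q i)) = 0" by blast+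
  then show "ncs X (\<Inter>i\<in>I. Q i)" unfolding X_def by (rule part2[OF sober range opn])
next
  fix Q assume "ncs X Q"
  then have hQ: "ncs (subtopology Y {y \<in> topspace Y. \<mu> y = 0}) Q" unfolding X_def .
  note s = sepX[OF range opn hQ]
  let ?F = "{P. ncs Y P \<and> Q \<subseteq> Y interior_of P}"
  have Fsub: "\<forall>P\<in>?F. ncs Y P \<and> Q \<subseteq> Y interior_of P" by blast
  have Fex: "\<forall>W. openin Y W \<and> Q \<subseteq> W \<longrightarrow> (\<exists>P\<in>?F. P \<subseteq> W)"
  proof (intro allI impI)
    fix W assume W: "openin Y W \<and> Q \<subseteq> W"
    have "\<exists>P. ncs Y P \<and> Q \<subseteq> Y interior_of P \<and> P \<subseteq> W"
      by (rule lc_sat[OF lc s(2) s(1) conjunct1[OF W] conjunct2[OF W]])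
    then obtain P where "ncs Y P" "Q \<subseteq> Y interior_of P" "P \<subseteq> W" by blast
    then show "\<exists>P\<in>?F. P \<subseteq> W" by blast
  qed
  show "\<exists>\<Q> :: 'a set set. filtered_family \<Q> id \<and> (\<forall>P\<in>\<Q>. ncs Y P) \<and>
              (INF P\<in>\<Q>. rmax \<mu> P) = 0 \<and> Q = \<Inter>\<Q> \<and> Q = (\<Inter>P\<in>\<Q>. Y interior_of P)"
    using family[OF range opn s(3) s(4) s(5) Fsub Fex] by (rule exI)
next
  fix Q assume cd: "continuous_dcpo_scott Y" and "ncs X Q"
  then have hQ: "ncs (subtopology Y {y \<in> topspace Y. \<mu> y = 0}) Q" unfolding X_def by simp
  note s = sepX[OF range opn hQ]
  let ?F = "{P. ncs Y P \<and> Q \<subseteq> Y interior_of P \<and>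
     (\<exists>A. finite A \<and> A \<noteq> {} \<and> A \<subseteq> topspace Y \<and> P = upclosure Y A)}"
  have Fsub: "\<forall>P\<in>?F. ncs Y P \<and> Q \<subseteq> Y interior_of P" by blast
  have Fex: "\<forall>W. openin Y W \<and> Q \<subseteq> W \<longrightarrow> (\<exists>P\<in>?F. P \<subseteq> W)"
  proof (intro allI impI)
    fix W assume W: "openin Y W \<and> Q \<subseteq> W"
    have "\<exists>A. finite A \<and> A \<noteq> {} \<and> A \<subseteq> topspace Y \<and> Q \<subseteq> Y interior_of (upclosure Y A) \<and> upclosure Y A \<subseteq> W"
      by (rule dcpo_approx[OF cd s(2) s(1) conjunct1[OF W] conjunct2[OF W]])
    then obtain A where A: "finite A" "A \<noteq> {}" "A \<subseteq> topspace Y"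
      "Q \<subseteq> Y interior_of (upclosure Y A)" "upclosure Y A \<subseteq> W"
      by blast
    have "A \<subseteq> upclosure Y A" by (rule upcl_sup[OF A(3)])
    then have n1: "upclosure Y A \<noteq> {}" using A(2) by blast
    have n2: "compactin Y (upclosure Y A)" by (rule upcl_compact[OF finite_imp_compactin[OF A(3) A(1)]])
    have "ncs Y (upclosure Y A)" unfolding ncs_def using n1 n2 upcl_sat[of Y A] by blast
    then have "upclosure Y A \<in> ?F" using A by blast
    then show "\<exists>P\<in>?F. P \<subseteq> W" using A(5) by blast
  qed
  have r: "filtered_family ?F id \<and> (\<forall>P\<in>?F. ncs Y P) \<and>
              (INF P\<in>?F. rmax \<mu> P) = 0 \<and> Q = \<Inter>?F \<and> Q = (\<Inter>P\<in>?F. Y interior_of P)"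
    by (rule family[OF range opn s(3) s(4) s(5) Fsub Fex])
  have "\<forall>P\<in>?F. \<exists>A. finite A \<and> A \<noteq> {} \<and> A \<subseteq> topspace Y \<and> P = upclosure Y A" by blast
  then show "\<exists>\<Q> :: 'a set set. filtered_family \<Q> id \<and> (\<forall>P\<in>\<Q>. ncs Y P) \<and>
              (INF P\<in>\<Q>. rmax \<mu> P) = 0 \<and> Q = \<Inter>\<Q> \<and> Q = (\<Inter>P\<in>\<Q>. Y interior_of P) \<and>
              (\<forall>P\<in>\<Q>. \<exists>A. finite A \<and> A \<noteq> {} \<and> A \<subseteq> topspace Y \<and> P = upclosure Y A)"
    using r by (elim conjE) (intro exI[of _ ?F] conjI)
qed

end
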